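(* Let $R,S,R',S'$ be rings whose only idempotents are $0$ and $1$, $M$ an $R$-$S$-bimodule, $N$ an $S$-$R$-bimodule, $M'$ an $R'$-$S'$-bimodule and $N'$ an $S'$-$R'$-bimodule. Let $T=\left[\begin{smallmatrix} R & M\\ N & S\end{smallmatrix}\right]$ and $T'=\left[\begin{smallmatrix} R' & M'\\ N' & S'\end{smallmatrix}\right]$ be the associated Morita context rings with both Morita maps equal to zero. Then $\mathrm{Iso}_0(T,T')=\mathrm{Iso}(T,T')$, i.e. every ring isomorphism $T\to T'$ lies in $\mathrm{Iso}_0^0(T,T')\cup\mathrm{Iso}_0^1(T,T')$.
   Context: All rings have an identity $1\neq 0$. With zero Morita maps, $T$ is the set of formal matrices $\left[\begin{smallmatrix} r & m\\ n & s\end{smallmatrix}\right]$ ($r\in R,m\in M,n\in N,s\in S$) with entrywise addition and product $\left[\begin{smallmatrix} r & m\\ n & s\end{smallmatrix}\right]\left[\begin{smallmatrix} r' & m'\\ n' & s'\end{smallmatrix}\right]=\left[\begin{smallmatrix} rr' & rm'+ms'\\ nr'+sn' & ss'\end{smallmatrix}\right]$; similarly for $T'$. $\mathrm{Iso}(T,T')$ is the set of all ring isomorphisms $T\to T'$. $\mathrm{Iso}_0^0(T,T')$ is the set of maps $\phi\left(\left[\begin{smallmatrix} r & m\\ n & s\end{smallmatrix}\right]\right)=\left[\begin{smallmatrix}\gamma(r) & \gamma(r)m'_0-m'_0\delta(s)+u(m)\\ n'_0\gamma(r)-\delta(s)n'_0+v(n) & \delta(s)\end{smallmatrix}\right]$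 where $\gamma:R\to R'$, $\delta:S\to S'$ are ring isomorphisms, $u:M\to M'$ and $v:N\to N'$ are additive bijections with $u(rms)=\gamma(r)u(m)\delta(s)$ and $v(snr)=\delta(s)v(n)\gamma(r)$, and $m'_0\in M'$, $n'_0\in N'$ are arbitrary (the remaining defining conditions are automatic when all Morita maps are zero). $\mathrm{Iso}_0^1(T,T')$ is the set of maps $\psi\left(\left[\begin{smallmatrix} r & m\\ n & s\end{smallmatrix}\right]\right)=\left[\begin{smallmatrix}\sigma(s) & m'_*\rho(r)-\sigma(s)m'_*+\nu(n)\\ \rho(r)n'_*-n'_*\sigma(s)+\mu(m) & \rho(r)\end{smallmatrix}\right]$ where $\rho:R\to S'$, $\sigma:S\to R'$ are ring isomorphisms, $\mu:M\to N'$, $\nu:N\to M'$ are additive bijections with $\mu(rms)=\rho(r)\mu(m)\sigma(s)$ and $\nu(snr)=\sigma(s)\nu(n)\rho(r)$, and $m'_*\in M'$, $n'_*\in N'$ are arbitrary. $\mathrm{Iso}_0(T,T')=\mathrm{Iso}_0^0(T,T')\cup\mathrm{Iso}_0^1(T,T')$. *)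

theory Defs
  imports Main
begin

text \<open>The Morita context ring with zero Morita maps is represented by 4-tuples (r, m, n, s).\<close>

definition ring_iso_fun :: "('a::ring_1 \<Rightarrow> 'b::ring_1) \<Rightarrow> bool" where
  "ring_iso_fun g \<longleftrightarrow> bij g \<and> (\<forall>x y. g (x + y) = g x + g y) \<and>
     (\<forall>x y. g (x * y) = g x * g y) \<and> g 1 = 1"

definition only_trivial_idempotents :: "'a::ring_1 itself \<Rightarrow> bool" where
  "only_trivial_idempotents _ \<longleftrightarrow> (\<forall>e::'a. e * e = e \<longrightarrow> e = 0 \<or> e = 1)"

definition bimodule :: "('r::ring_1 \<Rightarrow> 'm::ab_group_add \<Rightarrow> 'm) \<Rightarrow> ('m \<Rightarrow> 's::ring_1 \<Rightarrow> 'm) \<Rightarrow> bool" where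
  "bimodule lm rm \<longleftrightarrow>
     (\<forall>r r' m. lm (r + r') m = lm r m + lm r' m) \<and>
     (\<forall>r m m'. lm r (m + m') = lm r m + lm r m') \<and>
     (\<forall>r r' m. lm (r * r') m = lm r (lm r' m)) \<and>
     (\<forall>m. lm 1 m = m) \<and>
     (\<forall>m s s'. rm m (s + s') = rm m s + rm m s') \<and>
     (\<forall>m m' s. rm (m + m') s = rm m s + rm m' s) \<and>
     (\<forall>m s s'. rm m (s * s') = rm (rm m s) s') \<and>
     (\<forall>m. rm m 1 = m) \<and>
     (\<forall>r m s. lm r (rm m s) = rm (lm r m) s)"

definition add_bij :: "('a::ab_group_add \<Rightarrow> 'b::ab_group_add) \<Rightarrow> bool" where
  "add_bij u \<longleftrightarrow> bij u \<and> (\<forall>x y. u (x + y) = u x + u y)"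

definition mc_add :: "('r::ring_1 \<times> 'm::ab_group_add \<times> 'n::ab_group_add \<times> 's::ring_1)
    \<Rightarrow> ('r \<times> 'm \<times> 'n \<times> 's) \<Rightarrow> ('r \<times> 'm \<times> 'n \<times> 's)" where
  "mc_add x y = (case x of (r, m, n, s) \<Rightarrow> case y of (r', m', n', s') \<Rightarrow>
      (r + r', m + m', n + n', s + s'))"

definition mc_mult :: "('r::ring_1 \<Rightarrow> 'm::ab_group_add \<Rightarrow> 'm) \<Rightarrow> ('m \<Rightarrow> 's::ring_1 \<Rightarrow> 'm) \<Rightarrow>
    ('s \<Rightarrow> 'n::ab_group_add \<Rightarrow> 'n) \<Rightarrow> ('n \<Rightarrow> 'r \<Rightarrow> 'n) \<Rightarrow>
    ('r \<times> 'm \<times> 'n \<times> 's) \<Rightarrow> ('r \<times> 'm \<times> 'n \<times> 's) \<Rightarrow> ('r \<times> 'm \<times> 'n \<times> 's)" where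
  "mc_mult lmM rmM lmN rmN x y = (case x of (r, m, n, s) \<Rightarrow> case y of (r', m', n', s') \<Rightarrow>
      (r * r', lmM r m' + rmM m s', rmN n r' + lmN s n', s * s'))"

definition mc_one :: "('r::ring_1 \<times> 'm::ab_group_add \<times> 'n::ab_group_add \<times> 's::ring_1)" where
  "mc_one = (1, 0, 0, 1)"

definition mc_Iso ::
  "('r::ring_1 \<Rightarrow> 'm::ab_group_add \<Rightarrow> 'm) \<Rightarrow> ('m \<Rightarrow> 's::ring_1 \<Rightarrow> 'm) \<Rightarrow>
   ('s \<Rightarrow> 'n::ab_group_add \<Rightarrow> 'n) \<Rightarrow> ('n \<Rightarrow> 'r \<Rightarrow> 'n) \<Rightarrow>
   ('r2::ring_1 \<Rightarrow> 'm2::ab_group_add \<Rightarrow> 'm2) \<Rightarrow> ('m2 \<Rightarrow> 's2::ring_1 \<Rightarrow> 'm2) \<Rightarrow>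
   ('s2 \<Rightarrow> 'n2::ab_group_add \<Rightarrow> 'n2) \<Rightarrow> ('n2 \<Rightarrow> 'r2 \<Rightarrow> 'n2) \<Rightarrow>
   (('r \<times> 'm \<times> 'n \<times> 's) \<Rightarrow> ('r2 \<times> 'm2 \<times> 'n2 \<times> 's2)) set" where
  "mc_Iso lmM rmM lmN rmN lmM' rmM' lmN' rmN' =
     {f. bij f \<and> (\<forall>x y. f (mc_add x y) = mc_add (f x) (f y)) \<and>
         (\<forall>x y. f (mc_mult lmM rmM lmN rmN x y) = mc_mult lmM' rmM' lmN' rmN' (f x) (f y)) \<and>
         f mc_one = mc_one}"

definition mc_Iso00 ::
  "('r::ring_1 \<Rightarrow> 'm::ab_group_add \<Rightarrow> 'm) \<Rightarrow> ('m \<Rightarrow> 's::ring_1 \<Rightarrow> 'm) \<Rightarrow>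
   ('s \<Rightarrow> 'n::ab_group_add \<Rightarrow> 'n) \<Rightarrow> ('n \<Rightarrow> 'r \<Rightarrow> 'n) \<Rightarrow>
   ('r2::ring_1 \<Rightarrow> 'm2::ab_group_add \<Rightarrow> 'm2) \<Rightarrow> ('m2 \<Rightarrow> 's2::ring_1 \<Rightarrow> 'm2) \<Rightarrow>
   ('s2 \<Rightarrow> 'n2::ab_group_add \<Rightarrow> 'n2) \<Rightarrow> ('n2 \<Rightarrow> 'r2 \<Rightarrow> 'n2) \<Rightarrow>
   (('r \<times> 'm \<times> 'n \<times> 's) \<Rightarrow> ('r2 \<times> 'm2 \<times> 'n2 \<times> 's2)) set" where
  "mc_Iso00 lmM rmM lmN rmN lmM' rmM' lmN' rmN' =
     {\<phi>. \<exists>(\<gamma>::'r \<Rightarrow> 'r2) (\<delta>::'s \<Rightarrow> 's2) (u::'m \<Rightarrow> 'm2) (v::'n \<Rightarrow> 'n2) m0 n0.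
         ring_iso_fun \<gamma> \<and> ring_iso_fun \<delta> \<and> add_bij u \<and> add_bij v \<and>
         (\<forall>r m s. u (lmM r (rmM m s)) = lmM' (\<gamma> r) (rmM' (u m) (\<delta> s))) \<and>
         (\<forall>s n r. v (lmN s (rmN n r)) = lmN' (\<delta> s) (rmN' (v n) (\<gamma> r))) \<and>
         (\<forall>r m n s. \<phi> (r, m, n, s) =
            (\<gamma> r, lmM' (\<gamma> r) m0 - rmM' m0 (\<delta> s) + u m,
             rmN' n0 (\<gamma> r) - lmN' (\<delta> s) n0 + v n, \<delta> s))}"

definition mc_Iso01 ::
  "('r::ring_1 \<Rightarrow> 'm::ab_group_add \<Rightarrow> 'm) \<Rightarrow> ('m \<Rightarrow> 's::ring_1 \<Rightarrow> 'm) \<Rightarrow>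
   ('s \<Rightarrow> 'n::ab_group_add \<Rightarrow> 'n) \<Rightarrow> ('n \<Rightarrow> 'r \<Rightarrow> 'n) \<Rightarrow>
   ('r2::ring_1 \<Rightarrow> 'm2::ab_group_add \<Rightarrow> 'm2) \<Rightarrow> ('m2 \<Rightarrow> 's2::ring_1 \<Rightarrow> 'm2) \<Rightarrow>
   ('s2 \<Rightarrow> 'n2::ab_group_add \<Rightarrow> 'n2) \<Rightarrow> ('n2 \<Rightarrow> 'r2 \<Rightarrow> 'n2) \<Rightarrow>
   (('r \<times> 'm \<times> 'n \<times> 's) \<Rightarrow> ('r2 \<times> 'm2 \<times> 'n2 \<times> 's2)) set" where
  "mc_Iso01 lmM rmM lmN rmN lmM' rmM' lmN' rmN' =
     {\<psi>. \<exists>(\<rho>::'r \<Rightarrow> 's2) (\<sigma>::'s \<Rightarrow> 'r2) (\<mu>::'m \<Rightarrow> 'n2) (\<nu>::'n \<Rightarrow> 'm2) ms ns.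
         ring_iso_fun \<rho> \<and> ring_iso_fun \<sigma> \<and> add_bij \<mu> \<and> add_bij \<nu> \<and>
         (\<forall>r m s. \<mu> (lmM r (rmM m s)) = lmN' (\<rho> r) (rmN' (\<mu> m) (\<sigma> s))) \<and>
         (\<forall>s n r. \<nu> (lmN s (rmN n r)) = lmM' (\<sigma> s) (rmM' (\<nu> n) (\<rho> r))) \<and>
         (\<forall>r m n s. \<psi> (r, m, n, s) =
            (\<sigma> s, rmM' ms (\<rho> r) - lmM' (\<sigma> s) ms + \<nu> n,
             lmN' (\<rho> r) ns - rmN' ns (\<sigma> s) + \<mu> m, \<rho> r))}"

definition mc_Iso0 where
  "mc_Iso0 lmM rmM lmN rmN lmM' rmM' lmN' rmN' =
     mc_Iso00 lmM rmM lmN rmN lmM' rmM' lmN' rmN' \<union> mc_Iso01 lmM rmM lmN rmN lmM' rmM' lmN' rmN'"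

end

theory Submission
  imports Defs
begin

lemma addhom:
  fixes h :: "'a::ab_group_add \<Rightarrow> 'b::ab_group_add"
  assumes a: "\<And>x y. h (x+y) = h x + h y"
  shows "h 0 = 0" "h (-x) = - h x" "h (x - y) = h x - h y"
proof -
  have "h 0 + h 0 = h 0 + 0" using a[of 0 0] by simp
  then show h0: "h 0 = 0" by simp
  have "h x + h (-x) = 0" using a[of x "-x"] h0 by simp
  then show hn: "h (-x) = - h x" by (simp add: eq_neg_iff_add_eq_0 add.commute)
  have "h (x + -y) = h x + h (-y)" by (rule a)
  have "h (-y) = - h y" using a[of y "-y"] h0 by (simp add: eq_neg_iff_add_eq_0 add.commute)
  then show "h (x - y) = h x - h y" using a[of x "-y"] by simp
qed

lemma bm_basic:
  assumes "bimodule lm rm"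
  shows "lm (r + r') m = lm r m + lm r' m" "lm r (m + m') = lm r m + lm r m'"
    "lm r (lm r' m) = lm (r*r') m" "lm 1 m = m"
    "rm m (s+s') = rm m s + rm m s'" "rm (m+m') s = rm m s + rm m' s"
    "rm (rm m s) s' = rm m (s*s')" "rm m 1 = m" "lm r (rm m s) = rm (lm r m) s"
  using assms unfolding bimodule_def by auto

lemma bm_derived:
  assumes b: "bimodule lm rm"
  shows "lm r 0 = 0" "lm 0 m = 0" "rm 0 s = 0" "rm m 0 = 0"
    "lm r (-m) = - lm r m" "lm (-r) m = - lm r m" "rm (-m) s = - rm m s" "rm m (-s) = - rm m s"
    "lm r (m - m') = lm r m - lm r m'" "lm (r - r') m = lm r m - lm r' m"
    "rm (m - m') s = rm m s - rm m' s" "rm m (s - s') = rm m s - rm m s'"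
proof -
  have a1: "\<And>x y. lm r (x+y) = lm r x + lm r y" using bm_basic[OF b] by simp
  have a2: "\<And>x y. (\<lambda>r. lm r m) (x+y) = (\<lambda>r. lm r m) x + (\<lambda>r. lm r m) y" using bm_basic[OF b] by simp
  have a3: "\<And>x y. (\<lambda>m. rm m s) (x+y) = (\<lambda>m. rm m s) x + (\<lambda>m. rm m s) y" using bm_basic[OF b] by simp
  have a4: "\<And>x y. rm m (x+y) = rm m x + rm m y" using bm_basic[OF b] by simp
  show "lm r 0 = 0" "lm r (-m) = - lm r m" "lm r (m - m') = lm r m - lm r m'"
    using addhom[of "lm r", OF a1] by auto
  show "lm 0 m = 0" "lm (-r) m = - lm r m" "lm (r - r') m = lm r m - lm r' m"
    using addhom[of "\<lambda>r. lm r m", OF a2] by auto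
  show "rm 0 s = 0" "rm (-m) s = - rm m s" "rm (m - m') s = rm m s - rm m' s"
    using addhom[of "\<lambda>m. rm m s", OF a3] by auto
  show "rm m 0 = 0" "rm m (-s) = - rm m s" "rm m (s - s') = rm m s - rm m s'"
    using addhom[of "rm m", OF a4] by auto
qed

lemma caseA:
  fixes lmM :: "'r::ring_1 \<Rightarrow> 'm::ab_group_add \<Rightarrow> 'm" and rmM :: "'m \<Rightarrow> 's::ring_1 \<Rightarrow> 'm"
    and lmN :: "'s \<Rightarrow> 'n::ab_group_add \<Rightarrow> 'n" and rmN :: "'n \<Rightarrow> 'r \<Rightarrow> 'n"
    and lmM' :: "'r2::ring_1 \<Rightarrow> 'm2::ab_group_add \<Rightarrow> 'm2" and rmM' :: "'m2 \<Rightarrow> 's2::ring_1 \<Rightarrow> 'm2"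
    and lmN' :: "'s2 \<Rightarrow> 'n2::ab_group_add \<Rightarrow> 'n2" and rmN' :: "'n2 \<Rightarrow> 'r2 \<Rightarrow> 'n2"
  assumes bM: "bimodule lmM rmM" and bN: "bimodule lmN rmN"
    and bM': "bimodule lmM' rmM'" and bN': "bimodule lmN' rmN'"
    and fI: "f \<in> mc_Iso lmM rmM lmN rmN lmM' rmM' lmN' rmN'"
    and fe: "f (1,0,0,0) = (1,p,q,0)"
  shows "f \<in> mc_Iso00 lmM rmM lmN rmN lmM' rmM' lmN' rmN'"
proof -
  note S = bm_basic[OF bM] bm_derived[OF bM] bm_basic[OF bN] bm_derived[OF bN]
    bm_basic[OF bM'] bm_derived[OF bM'] bm_basic[OF bN'] bm_derived[OF bN']
  let ?m = "mc_mult lmM rmM lmN rmN" and ?m' = "mc_mult lmM' rmM' lmN' rmN'"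
  from fI have bf: "bij f" and fa: "\<And>x y. f (mc_add x y) = mc_add (f x) (f y)"
    and fm: "\<And>x y. f (?m x y) = ?m' (f x) (f y)" and f1: "f mc_one = mc_one"
    unfolding mc_Iso_def by auto
  have fF: "f (0,0,0,1) = (0,-p,-q,1)"
  proof -
    obtain a x y b where X: "f (0,0,0,1) = (a,x,y,b)" by (cases "f (0,0,0,1)") auto
    have "mc_add (1,0,0,0) (0,0,0,1) = (mc_one :: 'r \<times> 'm \<times> 'n \<times> 's)" by (simp add: mc_add_def mc_one_def)
    then have "mc_add (f (1,0,0,0)) (f (0,0,0,1)) = mc_one" using fa f1 by metis
    then have "1 + a = 1" "p + x = 0" "q + y = 0" "0 + b = 1" by (simp_all add: fe X mc_add_def mc_one_def)
    then show ?thesis using X by (auto simp: eq_neg_iff_add_eq_0 add.commute)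
  qed
  define \<gamma> where "\<gamma> r = fst (f (r,0,0,0))" for r
  define \<delta> where "\<delta> s = snd (snd (snd (f (0,0,0,s))))" for s
  define u where "u m = fst (snd (f (0,m,0,0)))" for m
  define v where "v n = fst (snd (snd (f (0,0,n,0))))" for n
  have fR: "f (r,0,0,0) = (\<gamma> r, lmM' (\<gamma> r) p, rmN' q (\<gamma> r), 0)" for r
  proof -
    have "(r,0,0,0) = ?m (?m (1,0,0,0) (r,0,0,0)) (1,0,0,0)" by (simp add: mc_mult_def S)
    then have e: "f (r,0,0,0) = ?m' (?m' (1,p,q,0) (f (r,0,0,0))) (1,p,q,0)" using fm fe by metis
    obtain a x y b where X: "f (r,0,0,0) = (a,x,y,b)" by (cases "f (r,0,0,0)") auto
    show ?thesis using e unfolding \<gamma>_def X by (simp add: mc_mult_def S)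
  qed
  have fS: "f (0,0,0,s) = (0, - rmM' p (\<delta> s), - lmN' (\<delta> s) q, \<delta> s)" for s
  proof -
    have "(0,0,0,s) = ?m (?m (0,0,0,1) (0,0,0,s)) (0,0,0,1)" by (simp add: mc_mult_def S)
    then have e: "f (0,0,0,s) = ?m' (?m' (0,-p,-q,1) (f (0,0,0,s))) (0,-p,-q,1)" using fm fF by metis
    obtain a x y b where X: "f (0,0,0,s) = (a,x,y,b)" by (cases "f (0,0,0,s)") auto
    show ?thesis using e unfolding \<delta>_def X by (simp add: mc_mult_def S)
  qed
  have fMm: "f (0,m,0,0) = (0, u m, 0, 0)" for m
  proof -
    have "(0,m,0,0) = ?m (?m (1,0,0,0) (0,m,0,0)) (0,0,0,1)" by (simp add: mc_mult_def S)
    then have e: "f (0,m,0,0) = ?m' (?m' (1,p,q,0) (f (0,m,0,0))) (0,-p,-q,1)" using fm fe fF by metis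
    obtain a x y b where X: "f (0,m,0,0) = (a,x,y,b)" by (cases "f (0,m,0,0)") auto
    show ?thesis using e unfolding u_def X by (simp add: mc_mult_def S)
  qed
  have fNn: "f (0,0,n,0) = (0, 0, v n, 0)" for n
  proof -
    have "(0,0,n,0) = ?m (?m (0,0,0,1) (0,0,n,0)) (1,0,0,0)" by (simp add: mc_mult_def S)
    then have e: "f (0,0,n,0) = ?m' (?m' (0,-p,-q,1) (f (0,0,n,0))) (1,p,q,0)" using fm fe fF by metis
    obtain a x y b where X: "f (0,0,n,0) = (a,x,y,b)" by (cases "f (0,0,n,0)") auto
    show ?thesis using e unfolding v_def X by (simp add: mc_mult_def S)
  qed
  have FORM: "f (r,m,n,s) = (\<gamma> r, lmM' (\<gamma> r) p - rmM' p (\<delta> s) + u m,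
      rmN' q (\<gamma> r) - lmN' (\<delta> s) q + v n, \<delta> s)" for r m n s
  proof -
    have "(r,m,n,s) = mc_add (r,0,0,0) (mc_add (0,m,0,0) (mc_add (0,0,n,0) (0,0,0,s)))"
      by (simp add: mc_add_def)
    then have "f (r,m,n,s) = mc_add (f (r,0,0,0)) (mc_add (f (0,m,0,0)) (mc_add (f (0,0,n,0)) (f (0,0,0,s))))"
      using fa by metis
    then show ?thesis by (simp add: fR fS fMm fNn mc_add_def algebra_simps)
  qed
  have inj: "inj f" using bf bij_is_inj by auto
  have sur: "\<exists>x. f x = y" for y using bf by (metis bij_pointE)
  have gadd: "\<gamma> (a + b) = \<gamma> a + \<gamma> b" for a b
  proof -
    have "(a+b,0,0,0) = mc_add (a,0,0,0) (b,0::'m,0::'n,0::'s)" by (simp add: mc_add_def)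
    then show ?thesis using fa[of "(a,0,0,0)" "(b,0,0,0)"] by (simp add: fR mc_add_def)
  qed
  have dadd: "\<delta> (a + b) = \<delta> a + \<delta> b" for a b
  proof -
    have "(0,0,0,a+b) = mc_add (0,0,0,a) (0::'r,0::'m,0::'n,b)" by (simp add: mc_add_def)
    then show ?thesis using fa[of "(0,0,0,a)" "(0,0,0,b)"] by (simp add: fS mc_add_def)
  qed
  have uadd: "u (a + b) = u a + u b" for a b
  proof -
    have "(0,a+b,0,0) = mc_add (0,a,0,0) (0::'r,b,0::'n,0::'s)" by (simp add: mc_add_def)
    then show ?thesis using fa[of "(0,a,0,0)" "(0,b,0,0)"] by (simp add: fMm mc_add_def)
  qed
  have vadd: "v (a + b) = v a + v b" for a b
  proof -
    have "(0,0,a+b,0) = mc_add (0,0,a,0) (0::'r,0::'m,b,0::'s)" by (simp add: mc_add_def)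
    then show ?thesis using fa[of "(0,0,a,0)" "(0,0,b,0)"] by (simp add: fNn mc_add_def)
  qed
  have g0: "\<gamma> 0 = 0" using addhom(1)[of \<gamma>] gadd by blast
  have d0: "\<delta> 0 = 0" using addhom(1)[of \<delta>] dadd by blast
  have ginj: "inj \<gamma>"
  proof (rule injI)
    fix a b assume "\<gamma> a = \<gamma> b"
    then have "f (a,0,0,0) = f (b,0,0,0)" by (simp add: fR)
    then show "a = b" using inj by (auto dest: injD)
  qed
  have dinj: "inj \<delta>"
  proof (rule injI)
    fix a b assume "\<delta> a = \<delta> b"
    then have "f (0,0,0,a) = f (0,0,0,b)" by (simp add: fS)
    then show "a = b" using inj by (auto dest: injD)
  qed
  have uinj: "inj u"
  proof (rule injI)
    fix a b assume "u a = u b"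
    then have "f (0,a,0,0) = f (0,b,0,0)" by (simp add: fMm)
    then show "a = b" using inj by (auto dest: injD)
  qed
  have vinj: "inj v"
  proof (rule injI)
    fix a b assume "v a = v b"
    then have "f (0,0,a,0) = f (0,0,b,0)" by (simp add: fNn)
    then show "a = b" using inj by (auto dest: injD)
  qed
  have gsurj: "surj \<gamma>"
  proof -
    { fix a obtain x where "f x = (a,0,0,0)" using sur by blast
      then have "\<exists>r. \<gamma> r = a" by (cases x) (auto simp: FORM) }
    then show ?thesis by (metis surjI)
  qed
  have dsurj: "surj \<delta>"
  proof -
    { fix a obtain x where "f x = (0,0,0,a)" using sur by blast
      then have "\<exists>r. \<delta> r = a" by (cases x) (auto simp: FORM) }
    then show ?thesis by (metis surjI)
  qed
  have usurj: "surj u"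
  proof -
    { fix a obtain x where x: "f x = (0,a,0,0)" using sur by blast
      obtain r m n s where xx: "x = (r,m,n,s)" by (cases x) auto
      have "\<gamma> r = 0" "\<delta> s = 0" using x xx by (auto simp: FORM)
      then have "r = 0" "s = 0" using ginj dinj g0 d0 by (metis injD)+
      then have "\<exists>m. u m = a" using x xx by (auto simp: FORM g0 d0 S) }
    then show ?thesis by (metis surjI)
  qed
  have vsurj: "surj v"
  proof -
    { fix a obtain x where x: "f x = (0,0,a,0)" using sur by blast
      obtain r m n s where xx: "x = (r,m,n,s)" by (cases x) auto
      have "\<gamma> r = 0" "\<delta> s = 0" using x xx by (auto simp: FORM)
      then have "r = 0" "s = 0" using ginj dinj g0 d0 by (metis injD)+
      then have "\<exists>m. v m = a" using x xx by (auto simp: FORM g0 d0 S) }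
    then show ?thesis by (metis surjI)
  qed
  have gmul: "\<gamma> (a * b) = \<gamma> a * \<gamma> b" for a b
  proof -
    have "(a*b,0,0,0) = ?m (a,0,0,0) (b,0,0,0)" by (simp add: mc_mult_def S)
    then show ?thesis using fm[of "(a,0,0,0)" "(b,0,0,0)"] by (simp add: fR mc_mult_def)
  qed
  have dmul: "\<delta> (a * b) = \<delta> a * \<delta> b" for a b
  proof -
    have "(0,0,0,a*b) = ?m (0,0,0,a) (0,0,0,b)" by (simp add: mc_mult_def S)
    then show ?thesis using fm[of "(0,0,0,a)" "(0,0,0,b)"] by (simp add: fS mc_mult_def)
  qed
  have g1: "\<gamma> 1 = 1" using fe by (simp add: \<gamma>_def)
  have d1: "\<delta> 1 = 1" using fF by (simp add: \<delta>_def)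
  have ucond: "u (lmM r (rmM m s)) = lmM' (\<gamma> r) (rmM' (u m) (\<delta> s))" for r m s
  proof -
    have "(0, lmM r (rmM m s), 0, 0) = ?m (?m (r,0,0,0) (0,m,0,0)) (0,0,0,s)" by (simp add: mc_mult_def S)
    then have "f (0, lmM r (rmM m s), 0, 0) = ?m' (?m' (f (r,0,0,0)) (f (0,m,0,0))) (f (0,0,0,s))"
      using fm by metis
    then show ?thesis by (simp add: fR fS fMm mc_mult_def S)
  qed
  have vcond: "v (lmN s (rmN n r)) = lmN' (\<delta> s) (rmN' (v n) (\<gamma> r))" for r n s
  proof -
    have "(0, 0, lmN s (rmN n r), 0) = ?m (?m (0,0,0,s) (0,0,n,0)) (r,0,0,0)" by (simp add: mc_mult_def S)
    then have "f (0, 0, lmN s (rmN n r), 0) = ?m' (?m' (f (0,0,0,s)) (f (0,0,n,0))) (f (r,0,0,0))"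
      using fm by metis
    then show ?thesis by (simp add: fR fS fNn mc_mult_def S)
  qed
  show ?thesis unfolding mc_Iso00_def
    apply (rule CollectI)
    apply (rule exI[of _ \<gamma>], rule exI[of _ \<delta>], rule exI[of _ u], rule exI[of _ v], rule exI[of _ p], rule exI[of _ q])
    using FORM ucond vcond gadd dadd uadd vadd gmul dmul g1 d1 ginj dinj uinj vinj gsurj dsurj usurj vsurj
    by (auto simp: ring_iso_fun_def add_bij_def bij_def)
qed


definition swp :: "'a \<times> 'b \<times> 'c \<times> 'd \<Rightarrow> 'd \<times> 'c \<times> 'b \<times> 'a" where
  "swp x = (case x of (a,b,c,d) \<Rightarrow> (d,c,b,a))"

lemma swp_swp[simp]: "swp (swp x) = x" by (cases x) (simp add: swp_def)
lemma swp_comp[simp]: "swp \<circ> (swp \<circ> f) = f" by (rule ext) simp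
lemma swp_id: "swp \<circ> swp = id" by (rule ext) simp
lemma swp_bij: "bij swp" by (rule o_bij[OF swp_id swp_id])

lemma swap_iso:
  assumes "f \<in> mc_Iso lmM rmM lmN rmN lmM' rmM' lmN' rmN'"
  shows "swp \<circ> f \<in> mc_Iso lmM rmM lmN rmN lmN' rmN' lmM' rmM'"
proof -
  have a: "swp (mc_add X Y) = mc_add (swp X) (swp Y)" for X Y
    by (cases X; cases Y) (simp add: swp_def mc_add_def)
  have m: "swp (mc_mult lmM' rmM' lmN' rmN' X Y) = mc_mult lmN' rmN' lmM' rmM' (swp X) (swp Y)" for X Y
    by (cases X; cases Y) (simp add: swp_def mc_mult_def add.commute)
  from assms have bf: "bij f" and fa: "\<And>x y. f (mc_add x y) = mc_add (f x) (f y)"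
    and fm: "\<And>x y. f (mc_mult lmM rmM lmN rmN x y) = mc_mult lmM' rmM' lmN' rmN' (f x) (f y)"
    and f1: "f mc_one = mc_one"
    unfolding mc_Iso_def by auto
  have "bij (swp \<circ> f)" using bf swp_bij by (rule bij_comp)
  moreover have "(swp \<circ> f) (mc_add x y) = mc_add ((swp \<circ> f) x) ((swp \<circ> f) y)" for x y
    by (simp add: fa a)
  moreover have "(swp \<circ> f) (mc_mult lmM rmM lmN rmN x y) = mc_mult lmN' rmN' lmM' rmM' ((swp \<circ> f) x) ((swp \<circ> f) y)" for x y
    by (simp add: fm m)
  moreover have "(swp \<circ> f) mc_one = mc_one" using f1 by (simp add: mc_one_def swp_def)
  ultimately show ?thesis unfolding mc_Iso_def by blast
qed

lemma iso00_sub: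
  fixes lmM :: "'r::ring_1 \<Rightarrow> 'm::ab_group_add \<Rightarrow> 'm" and rmM :: "'m \<Rightarrow> 's::ring_1 \<Rightarrow> 'm"
    and lmN :: "'s \<Rightarrow> 'n::ab_group_add \<Rightarrow> 'n" and rmN :: "'n \<Rightarrow> 'r \<Rightarrow> 'n"
    and lmM' :: "'r2::ring_1 \<Rightarrow> 'm2::ab_group_add \<Rightarrow> 'm2" and rmM' :: "'m2 \<Rightarrow> 's2::ring_1 \<Rightarrow> 'm2"
    and lmN' :: "'s2 \<Rightarrow> 'n2::ab_group_add \<Rightarrow> 'n2" and rmN' :: "'n2 \<Rightarrow> 'r2 \<Rightarrow> 'n2"
  assumes bM: "bimodule lmM rmM" and bN: "bimodule lmN rmN"
    and bM': "bimodule lmM' rmM'" and bN': "bimodule lmN' rmN'"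
    and fI: "f \<in> mc_Iso00 lmM rmM lmN rmN lmM' rmM' lmN' rmN'"
  shows "f \<in> mc_Iso lmM rmM lmN rmN lmM' rmM' lmN' rmN'"
proof -
  note S = bm_basic[OF bM] bm_derived[OF bM] bm_basic[OF bN] bm_derived[OF bN]
    bm_basic[OF bM'] bm_derived[OF bM'] bm_basic[OF bN'] bm_derived[OF bN']
  from fI obtain \<gamma> \<delta> u v m0 n0 where g: "ring_iso_fun \<gamma>" and d: "ring_iso_fun \<delta>"
    and u: "add_bij u" and v: "add_bij v"
    and uc: "\<And>r m s. u (lmM r (rmM m s)) = lmM' (\<gamma> r) (rmM' (u m) (\<delta> s))"
    and vc: "\<And>s n r. v (lmN s (rmN n r)) = lmN' (\<delta> s) (rmN' (v n) (\<gamma> r))"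
    and F: "\<And>r m n s. f (r, m, n, s) =
            (\<gamma> r, lmM' (\<gamma> r) m0 - rmM' m0 (\<delta> s) + u m,
             rmN' n0 (\<gamma> r) - lmN' (\<delta> s) n0 + v n, \<delta> s)"
    unfolding mc_Iso00_def by blast
  have ga: "\<gamma> (a+b) = \<gamma> a + \<gamma> b" "\<gamma> (a*b) = \<gamma> a * \<gamma> b" "\<gamma> 1 = 1" "bij \<gamma>" for a b
    using g by (auto simp: ring_iso_fun_def)
  have da: "\<delta> (a+b) = \<delta> a + \<delta> b" "\<delta> (a*b) = \<delta> a * \<delta> b" "\<delta> 1 = 1" "bij \<delta>" for a b
    using d by (auto simp: ring_iso_fun_def)
  have ua: "u (a+b) = u a + u b" "bij u" for a b using u by (auto simp: add_bij_def)
  have va: "v (a+b) = v a + v b" "bij v" for a b using v by (auto simp: add_bij_def)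
  have g0: "\<gamma> 0 = 0" using addhom(1)[of \<gamma>] ga by blast
  have d0: "\<delta> 0 = 0" using addhom(1)[of \<delta>] da by blast
  have u0: "u 0 = 0" using addhom(1)[of u] ua by blast
  have v0: "v 0 = 0" using addhom(1)[of v] va by blast
  have ul: "u (lmM r m) = lmM' (\<gamma> r) (u m)" for r m using uc[of r m 1] S da by simp
  have ur: "u (rmM m s) = rmM' (u m) (\<delta> s)" for s m using uc[of 1 m s] S ga by simp
  have vl: "v (lmN s n) = lmN' (\<delta> s) (v n)" for s n using vc[of s n 1] S ga by simp
  have vr: "v (rmN n r) = rmN' (v n) (\<gamma> r)" for r n using vc[of 1 n r] S da by simp
  have inj: "inj f"
  proof (rule injI)
    fix x y assume e: "f x = f y"
    obtain r m n s where x: "x = (r,m,n,s)" by (cases x) auto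
    obtain r' m' n' s' where y: "y = (r',m',n',s')" by (cases y) auto
    from e have "\<gamma> r = \<gamma> r'" "\<delta> s = \<delta> s'" by (auto simp: x y F)
    then have rs: "r = r'" "s = s'" using ga(4) da(4) by (metis bij_def injD)+
    from e have "u m = u m'" "v n = v n'" by (auto simp: x y F rs)
    then have "m = m'" "n = n'" using ua(2) va(2) by (metis bij_def injD)+
    then show "x = y" using x y rs by simp
  qed
  have sur: "surj f"
  proof -
    { fix y :: "'r2 \<times> 'm2 \<times> 'n2 \<times> 's2"
      obtain a x z b where y: "y = (a,x,z,b)" by (cases y) auto
      obtain r where r: "\<gamma> r = a" using ga(4) by (metis bij_pointE)
      obtain s where s: "\<delta> s = b" using da(4) by (metis bij_pointE)
      obtain m where m: "u m = x - (lmM' a m0 - rmM' m0 b)" using ua(2) by (metis bij_pointE)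
      obtain n where n: "v n = z - (rmN' n0 a - lmN' b n0)" using va(2) by (metis bij_pointE)
      have "f (r,m,n,s) = y" by (simp add: F r s m n y)
      then have "\<exists>x. y = f x" by metis }
    then show ?thesis by (metis surjI)
  qed
  have add: "f (mc_add x y) = mc_add (f x) (f y)" for x y
    by (cases x; cases y) (simp add: mc_add_def F ga da ua va S algebra_simps)
  have mul: "f (mc_mult lmM rmM lmN rmN x y) = mc_mult lmM' rmM' lmN' rmN' (f x) (f y)" for x y
    by (cases x; cases y) (simp add: mc_mult_def F ga da ua va S ul ur vl vr algebra_simps)
  have one: "f mc_one = mc_one" by (simp add: mc_one_def F ga da S g0 d0 u0 v0)
  have "bij f" using inj sur by (simp add: bij_def)
  then show ?thesis unfolding mc_Iso_def using add mul one by simp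
qed

lemma iso00_to_01:
  assumes "g \<in> mc_Iso00 lmM rmM lmN rmN lmN' rmN' lmM' rmM'"
  shows "swp \<circ> g \<in> mc_Iso01 lmM rmM lmN rmN lmM' rmM' lmN' rmN'"
  using assms unfolding mc_Iso00_def mc_Iso01_def
  apply clarify
  subgoal for \<gamma> \<delta> u v m0 n0
    apply (rule exI[of _ \<gamma>], rule exI[of _ \<delta>], rule exI[of _ u], rule exI[of _ v], rule exI[of _ n0], rule exI[of _ m0])
    by (auto simp: swp_def)
  done

lemma iso01_to_00:
  assumes "g \<in> mc_Iso01 lmM rmM lmN rmN lmM' rmM' lmN' rmN'"
  shows "swp \<circ> g \<in> mc_Iso00 lmM rmM lmN rmN lmN' rmN' lmM' rmM'"
  using assms unfolding mc_Iso00_def mc_Iso01_def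
  apply clarify
  subgoal for \<rho> \<sigma> \<mu> \<nu> ms ns
    apply (rule exI[of _ \<rho>], rule exI[of _ \<sigma>], rule exI[of _ \<mu>], rule exI[of _ \<nu>], rule exI[of _ ns], rule exI[of _ ms])
    by (auto simp: swp_def)
  done

theorem theorem4p7:
  fixes lmM :: "'r::ring_1 \<Rightarrow> 'm::ab_group_add \<Rightarrow> 'm" and rmM :: "'m \<Rightarrow> 's::ring_1 \<Rightarrow> 'm"
    and lmN :: "'s \<Rightarrow> 'n::ab_group_add \<Rightarrow> 'n" and rmN :: "'n \<Rightarrow> 'r \<Rightarrow> 'n"
    and lmM' :: "'r2::ring_1 \<Rightarrow> 'm2::ab_group_add \<Rightarrow> 'm2" and rmM' :: "'m2 \<Rightarrow> 's2::ring_1 \<Rightarrow> 'm2"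
    and lmN' :: "'s2 \<Rightarrow> 'n2::ab_group_add \<Rightarrow> 'n2" and rmN' :: "'n2 \<Rightarrow> 'r2 \<Rightarrow> 'n2"
  assumes "(0::'r) \<noteq> 1" and "(0::'s) \<noteq> 1" and "(0::'r2) \<noteq> 1" and "(0::'s2) \<noteq> 1"
    and "only_trivial_idempotents TYPE('r)" and "only_trivial_idempotents TYPE('s)"
    and "only_trivial_idempotents TYPE('r2)" and "only_trivial_idempotents TYPE('s2)"
    and "bimodule lmM rmM" and "bimodule lmN rmN"
    and "bimodule lmM' rmM'" and "bimodule lmN' rmN'"
  shows "mc_Iso0 lmM rmM lmN rmN lmM' rmM' lmN' rmN' = mc_Iso lmM rmM lmN rmN lmM' rmM' lmN' rmN'"
proof
  note S = bm_basic[OF assms(11)] bm_derived[OF assms(11)] bm_basic[OF assms(12)] bm_derived[OF assms(12)]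
  show "mc_Iso0 lmM rmM lmN rmN lmM' rmM' lmN' rmN' \<subseteq> mc_Iso lmM rmM lmN rmN lmM' rmM' lmN' rmN'"
  proof
    fix f assume "f \<in> mc_Iso0 lmM rmM lmN rmN lmM' rmM' lmN' rmN'"
    then consider "f \<in> mc_Iso00 lmM rmM lmN rmN lmM' rmM' lmN' rmN'"
      | "f \<in> mc_Iso01 lmM rmM lmN rmN lmM' rmM' lmN' rmN'" unfolding mc_Iso0_def by blast
    then show "f \<in> mc_Iso lmM rmM lmN rmN lmM' rmM' lmN' rmN'"
    proof cases
      case 1 then show ?thesis using iso00_sub assms(9-12) by blast
    next
      case 2
      then have "swp \<circ> f \<in> mc_Iso00 lmM rmM lmN rmN lmN' rmN' lmM' rmM'" by (rule iso01_to_00)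
      then have "swp \<circ> f \<in> mc_Iso lmM rmM lmN rmN lmN' rmN' lmM' rmM'" using iso00_sub assms(9-12) by blast
      then have "swp \<circ> (swp \<circ> f) \<in> mc_Iso lmM rmM lmN rmN lmM' rmM' lmN' rmN'" by (rule swap_iso)
      then show ?thesis by simp
    qed
  qed
  show "mc_Iso lmM rmM lmN rmN lmM' rmM' lmN' rmN' \<subseteq> mc_Iso0 lmM rmM lmN rmN lmM' rmM' lmN' rmN'"
  proof
    fix f assume fI: "f \<in> mc_Iso lmM rmM lmN rmN lmM' rmM' lmN' rmN'"
    from fI have bf: "bij f" and fa: "\<And>x y. f (mc_add x y) = mc_add (f x) (f y)"
      and fm: "\<And>x y. f (mc_mult lmM rmM lmN rmN x y) = mc_mult lmM' rmM' lmN' rmN' (f x) (f y)"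
      and f1: "f mc_one = mc_one"
      unfolding mc_Iso_def by auto
    have f0: "f (0,0,0,0) = (0,0,0,0)"
    proof -
      obtain a x y b where X: "f (0,0,0,0) = (a,x,y,b)" by (cases "f (0,0,0,0)") auto
      have "mc_add (0,0,0,0) (0,0,0,0) = (0::'r,0::'m,0::'n,0::'s)" by (simp add: mc_add_def)
      then have "(a,x,y,b) = mc_add (a,x,y,b) (a,x,y,b)" using fa X by metis
      then show ?thesis using X by (simp add: mc_add_def)
    qed
    have ee: "mc_mult lmM rmM lmN rmN (1,0,0,0) (1,0,0,0) = (1::'r,0::'m,0::'n,0::'s)"
      using assms(9,10) by (simp add: mc_mult_def bm_basic bm_derived)
    obtain a p q b where E: "f (1,0,0,0) = (a,p,q,b)" by (cases "f (1,0,0,0)") auto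
    have "mc_mult lmM' rmM' lmN' rmN' (a,p,q,b) (a,p,q,b) = (a,p,q,b)" using fm ee E by metis
    then have id: "a*a = a" "lmM' a p + rmM' p b = p" "rmN' q a + lmN' b q = q" "b*b = b"
      by (simp_all add: mc_mult_def)
    have a01: "a = 0 \<or> a = 1" using id(1) assms(7) by (simp add: only_trivial_idempotents_def)
    have b01: "b = 0 \<or> b = 1" using id(4) assms(8) by (simp add: only_trivial_idempotents_def)
    have inj: "inj f" using bf bij_is_inj by auto
    have n0: "f (1,0,0,0) \<noteq> (0,0,0,0)"
    proof
      assume "f (1,0,0,0) = (0,0,0,0)"
      then have "(1::'r,0::'m,0::'n,0::'s) = (0,0,0,0)" using f0 inj by (metis injD)
      then show False using assms(1) by simp
    qed
    have n1: "f (1,0,0,0) \<noteq> (1,0,0,1)"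
    proof
      assume "f (1,0,0,0) = (1,0,0,1)"
      then have "(1::'r,0::'m,0::'n,0::'s) = (1,0,0,1)" using f1 inj by (metis injD mc_one_def)
      then show False using assms(2) by simp
    qed
    consider "a = 1" "b = 0" | "a = 0" "b = 1"
    proof -
      { assume "a = 0" "b = 0"
        then have "p = 0" "q = 0" using id S by simp_all
        then have False using n0 E \<open>a = 0\<close> \<open>b = 0\<close> by simp }
      moreover
      { assume "a = 1" "b = 1"
        then have "p + p = p" "q + q = q" using id S by (simp_all add: add.commute)
        then have "p = 0" "q = 0" by simp_all
        then have False using n1 E \<open>a = 1\<close> \<open>b = 1\<close> by simp }
      ultimately show ?thesis using that a01 b01 by blast
    qed
    then show "f \<in> mc_Iso0 lmM rmM lmN rmN lmM' rmM' lmN' rmN'"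
    proof cases
      case 1
      then have "f \<in> mc_Iso00 lmM rmM lmN rmN lmM' rmM' lmN' rmN'"
        using caseA[OF assms(9-12) fI] E by simp
      then show ?thesis unfolding mc_Iso0_def by blast
    next
      case 2
      have g: "swp \<circ> f \<in> mc_Iso lmM rmM lmN rmN lmN' rmN' lmM' rmM'" using fI by (rule swap_iso)
      have "(swp \<circ> f) (1,0,0,0) = (1,q,p,0)" using E 2 by (simp add: swp_def)
      then have "swp \<circ> f \<in> mc_Iso00 lmM rmM lmN rmN lmN' rmN' lmM' rmM'"
        using caseA[OF assms(9,10,12,11) g] by simp
      then have "swp \<circ> (swp \<circ> f) \<in> mc_Iso01 lmM rmM lmN rmN lmM' rmM' lmN' rmN'" by (rule iso00_to_01)
      then show ?thesis unfolding mc_Iso0_def by simp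
    qed
  qed
qed

end
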